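(* Let $p$ be an odd prime and let $W_p=C_2\wr C_p$. Then $\mathrm{diam}_{\max}(W_p)\le 20(p-1)$.
   Context: The wreath product $W_p=C_2\wr C_p$ is the semidirect product $U\rtimes C_p$, where $U=\mathbb{F}_2^{\,p}$ and a generator of the cyclic group $C_p$ of order $p$ acts on $U$ by cyclically permuting coordinates; thus $|W_p|=p\,2^p$. For a finite group $G$ and a generating set $X$, the Cayley graph $\mathrm{Cay}(G,X)$ has vertex set $G$, with $g$ adjacent to $gx^{\pm1}$ for $x\in X$; $\mathrm{diam}(G,X)$ is its diameter, i.e. the smallest $k$ such that every element of $G$ is a product of at most $k$ elements of $X\cup X^{-1}$. The worst diameter is $\mathrm{diam}_{\max}(G)=\max\{\mathrm{diam}(G,X): X\subseteq G,\ \langle X\rangle=G\}$. *)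

theory Defs
  imports "HOL-Algebra.Generated_Groups" "HOL-Computational_Algebra.Primes"
begin

definition word_prod :: "('a, 'b) monoid_scheme \<Rightarrow> 'a list \<Rightarrow> 'a" where
  "word_prod G xs = foldr (\<lambda>x y. x \<otimes>\<^bsub>G\<^esub> y) xs \<one>\<^bsub>G\<^esub>"

definition cay_diam :: "('a, 'b) monoid_scheme \<Rightarrow> 'a set \<Rightarrow> nat" where
  "cay_diam G X = (LEAST k. \<forall>g \<in> carrier G. \<exists>xs.
      set xs \<subseteq> X \<union> (\<lambda>x. inv\<^bsub>G\<^esub> x) ` X \<and> length xs \<le> k \<and> g = word_prod G xs)"

definition diam_max :: "('a, 'b) monoid_scheme \<Rightarrow> nat" where
  "diam_max G = Max {cay_diam G X | X. X \<subseteq> carrier G \<and> generate G X = carrier G}"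

text \<open>An element (A, a): A \<subseteq> {0..<p}
  is the support of a vector in F_2^p, a \<in> {0..<p} the element of C_p.
  The generator of C_p acts by cyclically shifting coordinates i \<mapsto> i+1 mod p.\<close>
definition cshift :: "nat \<Rightarrow> nat \<Rightarrow> nat set \<Rightarrow> nat set" where
  "cshift p a B = (\<lambda>i. (i + a) mod p) ` B"

definition wreath_mult :: "nat \<Rightarrow> nat set \<times> nat \<Rightarrow> nat set \<times> nat \<Rightarrow> nat set \<times> nat" where
  "wreath_mult p x y = (let A = fst x; a = snd x; B = cshift p a (fst y); b = snd y in
     ((A - B) \<union> (B - A), (a + b) mod p))"

definition wreath :: "nat \<Rightarrow> (nat set \<times> nat) monoid" where
  "wreath p = \<lparr> carrier = {x. fst x \<subseteq> {0..<p} \<and> snd x < p},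
     monoid.mult = wreath_mult p, monoid.one = ({}, 0) \<rparr>"

end

theory Submission
  imports Defs "HOL-Number_Theory.Number_Theory"
begin

lemma cshift_sub: "0 < p \<Longrightarrow> cshift p a B \<subseteq> {0..<p}"
  unfolding cshift_def by auto

lemma cshift_0: "B \<subseteq> {0..<p} \<Longrightarrow> cshift p 0 B = B"
  unfolding cshift_def by (force simp: image_iff)

lemma modinj_aux: "x < p \<Longrightarrow> y < p \<Longrightarrow> x \<le> y \<Longrightarrow> (x + a) mod p = (y + a) mod p \<Longrightarrow> x = (y::nat)"
proof -
  assume h: "x < p" "y < p" "x \<le> y" "(x + a) mod p = (y + a) mod p"
  have "p dvd (y + a) - (x + a)" using h mod_eq_dvd_iff_nat[of "x+a" "y+a" p] by simp
  hence "p dvd y - x" by simp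
  moreover have "y - x < p" using h by simp
  ultimately have "y - x = 0" by (cases "y - x = 0") (auto dest: dvd_imp_le)
  thus ?thesis using h by simp
qed

lemma cshift_inj: "inj_on (\<lambda>i. (i + a) mod p) {0..<(p::nat)}"
proof (rule inj_onI)
  fix x y :: nat assume "x \<in> {0..<p}" "y \<in> {0..<p}" "(x + a) mod p = (y + a) mod p"
  then show "x = y" using modinj_aux[of x p y a] modinj_aux[of y p x a]
    by (cases "x \<le> y") auto
qed
lemma cshift_comp: "cshift p a (cshift p b B) = cshift p ((a + b) mod p) B"
  unfolding cshift_def image_image
  by (rule image_cong) (simp_all add: mod_add_left_eq mod_add_right_eq add.commute add.left_commute)

abbreviation sd :: "nat set \<Rightarrow> nat set \<Rightarrow> nat set" where
  "sd A B \<equiv> (A - B) \<union> (B - A)"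

lemma cshift_sd: "A \<subseteq> {0..<p} \<Longrightarrow> B \<subseteq> {0..<p} \<Longrightarrow>
   cshift p a (sd A B) = sd (cshift p a A) (cshift p a B)"
  unfolding cshift_def image_Un
  using inj_on_image_set_diff[OF cshift_inj[of a p], of A B] inj_on_image_set_diff[OF cshift_inj[of a p], of B A]
  by auto

lemma cshift_card: "B \<subseteq> {0..<p} \<Longrightarrow> card (cshift p a B) = card B"
  unfolding cshift_def by (rule card_image) (rule inj_on_subset[OF cshift_inj])

lemma cshift_empty[simp]: "cshift p a {} = {}"
  unfolding cshift_def by simp

lemma cshift_single: "cshift p a {i} = {(i + a) mod p}"
  unfolding cshift_def by simp

lemma wreath_carrier: "x \<in> carrier (wreath p) \<longleftrightarrow> fst x \<subseteq> {0..<p} \<and> snd x < p"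
  unfolding wreath_def by simp

lemma wreath_mult: "x \<otimes>\<^bsub>wreath p\<^esub> y = (sd (fst x) (cshift p (snd x) (fst y)), (snd x + snd y) mod p)"
  unfolding wreath_def wreath_mult_def Let_def by simp

lemma wreath_one: "\<one>\<^bsub>wreath p\<^esub> = ({}, 0)"
  unfolding wreath_def by simp

lemma modneg: "a < (p::nat) \<Longrightarrow> ((p - a) mod p + a) mod p = 0"
  by (simp add: mod_add_left_eq)

lemma wreath_group: assumes "0 < p" shows "group (wreath p)"
proof (rule groupI)
  fix x y assume "x \<in> carrier (wreath p)" "y \<in> carrier (wreath p)"
  then show "x \<otimes>\<^bsub>wreath p\<^esub> y \<in> carrier (wreath p)"
    using cshift_sub[OF assms] by (auto simp: wreath_carrier wreath_mult)
next
  show "\<one>\<^bsub>wreath p\<^esub> \<in> carrier (wreath p)" using assms by (simp add: wreath_carrier wreath_one)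
next
  fix x y z assume h: "x \<in> carrier (wreath p)" "y \<in> carrier (wreath p)" "z \<in> carrier (wreath p)"
  obtain A a where x: "x = (A, a)" by fastforce
  obtain B b where y: "y = (B, b)" by fastforce
  obtain C c where z: "z = (C, c)" by fastforce
  have s: "A \<subseteq> {0..<p}" "B \<subseteq> {0..<p}" "C \<subseteq> {0..<p}" using h x y z by (auto simp: wreath_carrier)
  have e: "cshift p a (sd B (cshift p b C)) = sd (cshift p a B) (cshift p ((a + b) mod p) C)"
    using cshift_sd[OF s(2) cshift_sub[OF assms]] cshift_comp by simp
  show "x \<otimes>\<^bsub>wreath p\<^esub> y \<otimes>\<^bsub>wreath p\<^esub> z = x \<otimes>\<^bsub>wreath p\<^esub> (y \<otimes>\<^bsub>wreath p\<^esub> z)"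
    unfolding x y z wreath_mult fst_conv snd_conv e
    by (auto simp: mod_add_left_eq mod_add_right_eq add.assoc)
next
  fix x assume "x \<in> carrier (wreath p)"
  then show "\<one>\<^bsub>wreath p\<^esub> \<otimes>\<^bsub>wreath p\<^esub> x = x"
    by (auto simp: wreath_carrier wreath_mult wreath_one cshift_0 prod_eq_iff)
next
  fix x assume h: "x \<in> carrier (wreath p)"
  let ?y = "(cshift p ((p - snd x) mod p) (fst x), (p - snd x) mod p)"
  have "?y \<in> carrier (wreath p)" using cshift_sub[OF assms] assms by (simp add: wreath_carrier)
  moreover have "?y \<otimes>\<^bsub>wreath p\<^esub> x = \<one>\<^bsub>wreath p\<^esub>"
    using h by (auto simp: wreath_carrier wreath_mult wreath_one modneg)
  ultimately show "\<exists>y\<in>carrier (wreath p). y \<otimes>\<^bsub>wreath p\<^esub> x = \<one>\<^bsub>wreath p\<^esub>" by blast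
qed



lemma card_sd: "finite A \<Longrightarrow> finite B \<Longrightarrow> card (sd A B) + 2 * card (A \<inter> B) = card A + card B"
proof -
  assume f: "finite A" "finite B"
  have "card (sd A B) = card (A - B) + card (B - A)"
    by (rule card_Un_disjoint) (use f in auto)
  moreover have "card (A - B) + card (A \<inter> B) = card A"
    using card_Int_Diff[OF f(1), of B] by simp
  moreover have "card (B - A) + card (A \<inter> B) = card B"
    using card_Int_Diff[OF f(2), of A] by (simp add: Int_commute)
  ultimately show ?thesis by simp
qed

lemma odd_card_sd: "finite A \<Longrightarrow> finite B \<Longrightarrow> odd (card (sd A B)) \<longleftrightarrow> (odd (card A) \<noteq> odd (card B))"
proof -
  assume f: "finite A" "finite B"
  have "card (sd A B) + 2 * card (A \<inter> B) = card A + card B" using card_sd[OF f] .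
  thus ?thesis by presburger
qed

definition vec :: "nat set \<Rightarrow> nat set \<times> nat" where "vec B = (B, 0)"

definition par :: "nat set \<times> nat \<Rightarrow> bool" where "par g = odd (card (fst g))"

context fixes p :: nat assumes p0: "0 < p"
begin

interpretation W: group "wreath p" using wreath_group[OF p0] .

lemma wreath_inv: "x \<in> carrier (wreath p) \<Longrightarrow>
   inv\<^bsub>wreath p\<^esub> x = (cshift p ((p - snd x) mod p) (fst x), (p - snd x) mod p)"
  by (rule W.inv_equality) (use p0 cshift_sub[OF p0] in \<open>auto simp: wreath_carrier wreath_mult wreath_one modneg\<close>)

lemma snd_inv: "x \<in> carrier (wreath p) \<Longrightarrow> snd (inv\<^bsub>wreath p\<^esub> x) = (p - snd x) mod p"
  by (simp add: wreath_inv)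

lemma snd_mult: "snd (x \<otimes>\<^bsub>wreath p\<^esub> y) = (snd x + snd y) mod p"
  by (simp add: wreath_mult)

lemma vec_carrier: "B \<subseteq> {0..<p} \<Longrightarrow> vec B \<in> carrier (wreath p)"
  using p0 by (simp add: vec_def wreath_carrier)

lemma vec_mult: "C \<subseteq> {0..<p} \<Longrightarrow> vec B \<otimes>\<^bsub>wreath p\<^esub> vec C = vec (sd B C)"
  by (simp add: vec_def wreath_mult cshift_0)

lemma vec_empty: "vec {} = \<one>\<^bsub>wreath p\<^esub>"
  by (simp add: vec_def wreath_one)

lemma vec_eq: "snd g = 0 \<Longrightarrow> g = vec (fst g)"
  by (simp add: vec_def prod_eq_iff)

lemma commute_vec: "g \<in> carrier (wreath p) \<Longrightarrow> D \<subseteq> {0..<p} \<Longrightarrow>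
   g \<otimes>\<^bsub>wreath p\<^esub> vec D = vec (cshift p (snd g) D) \<otimes>\<^bsub>wreath p\<^esub> g"
  by (auto simp: vec_def wreath_mult wreath_carrier cshift_0)

lemma conj_vec: "g \<in> carrier (wreath p) \<Longrightarrow> D \<subseteq> {0..<p} \<Longrightarrow>
   g \<otimes>\<^bsub>wreath p\<^esub> vec D \<otimes>\<^bsub>wreath p\<^esub> inv\<^bsub>wreath p\<^esub> g = vec (cshift p (snd g) D)"
  by (simp add: commute_vec W.m_assoc vec_carrier cshift_sub[OF p0])

lemma snd_pow: "x \<in> carrier (wreath p) \<Longrightarrow> snd (x [^]\<^bsub>wreath p\<^esub> (n::nat)) = n * snd x mod p"
proof (induction n)
  case 0 thus ?case by (simp add: wreath_one)
next
  case (Suc n) thus ?case by (simp add: snd_mult mod_add_right_eq add.commute)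
qed

lemma par_mult: "g \<in> carrier (wreath p) \<Longrightarrow> h \<in> carrier (wreath p) \<Longrightarrow>
   par (g \<otimes>\<^bsub>wreath p\<^esub> h) \<longleftrightarrow> (par g \<noteq> par h)"
  unfolding par_def wreath_mult fst_conv
  by (subst odd_card_sd) (auto simp: wreath_carrier cshift_card intro: finite_subset[OF _ finite_atLeastLessThan] finite_subset[OF cshift_sub[OF p0]])

lemma par_one: "\<not> par \<one>\<^bsub>wreath p\<^esub>"
  by (simp add: par_def wreath_one)

lemma par_inv: "g \<in> carrier (wreath p) \<Longrightarrow> par (inv\<^bsub>wreath p\<^esub> g) = par g"
  using par_mult[of g "inv\<^bsub>wreath p\<^esub> g"] par_one by auto

lemma par_pow: "x \<in> carrier (wreath p) \<Longrightarrow> par (x [^]\<^bsub>wreath p\<^esub> (n::nat)) \<longleftrightarrow> (odd n \<and> par x)"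
proof (induction n)
  case 0 thus ?case by (simp add: par_one)
next
  case (Suc n) thus ?case by (auto simp: par_mult)
qed

end


lemma odd_card_symdiff: "finite A \<Longrightarrow> finite B \<Longrightarrow>
  odd (card ((A - B) \<union> (B - A))) \<longleftrightarrow> (odd (card A) \<noteq> odd (card B))"
proof -
  assume f: "finite A" "finite B"
  have "card ((A - B) \<union> (B - A)) = card (A - B) + card (B - A)"
    by (rule card_Un_disjoint) (use f in auto)
  moreover have "card (A - B) + card (A \<inter> B) = card A"
    using card_Int_Diff[OF f(1), of B] by simp
  moreover have "card (B - A) + card (A \<inter> B) = card B"
    using card_Int_Diff[OF f(2), of A] by (simp add: Int_commute)
  ultimately show ?thesis by presburger
qed

definition xsum :: "('i \<Rightarrow> nat set) \<Rightarrow> 'i set \<Rightarrow> nat set" where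
  "xsum f F = {i. odd (card {y\<in>F. i \<in> f y})}"

lemma xsum_empty[simp]: "xsum f {} = {}"
  by (simp add: xsum_def)

lemma xsum_single: "xsum f {y} = f y"
proof -
  have "\<And>i. {z\<in>{y}. i \<in> f z} = (if i \<in> f y then {y} else {})" by auto
  thus ?thesis by (auto simp: xsum_def)
qed

lemma xsum_symdiff: "finite A \<Longrightarrow> finite B \<Longrightarrow>
   xsum f ((A - B) \<union> (B - A)) = sd (xsum f A) (xsum f B)"
proof -
  assume f: "finite A" "finite B"
  have e: "\<And>i. {y\<in>(A - B) \<union> (B - A). i \<in> f y} =
     ({y\<in>A. i \<in> f y} - {y\<in>B. i \<in> f y}) \<union> ({y\<in>B. i \<in> f y} - {y\<in>A. i \<in> f y})" by auto
  show ?thesis unfolding xsum_def e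
    using odd_card_symdiff[of "{y\<in>A. i \<in> f y}" "{y\<in>B. i \<in> f y}" for i] f by auto
qed

lemma xsum_insert: "finite F \<Longrightarrow> y \<notin> F \<Longrightarrow> xsum f (insert y F) = sd (f y) (xsum f F)"
proof -
  assume f: "finite F" "y \<notin> F"
  have e: "insert y F = ({y} - F) \<union> (F - {y})" using f by auto
  have "xsum f (({y} - F) \<union> (F - {y})) = sd (xsum f {y}) (xsum f F)"
    by (rule xsum_symdiff) (use f in auto)
  thus ?thesis unfolding e[symmetric] xsum_single .
qed

lemma xsum_sub: "(\<And>y. y \<in> F \<Longrightarrow> f y \<subseteq> {0..<p}) \<Longrightarrow> xsum f F \<subseteq> {0..<p}"
proof
  fix i assume h: "\<And>y. y \<in> F \<Longrightarrow> f y \<subseteq> {0..<p}" and i: "i \<in> xsum f F"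
  hence o: "odd (card {y\<in>F. i \<in> f y})" by (simp add: xsum_def)
  have "card {y\<in>F. i \<in> f y} \<noteq> 0" using o by (cases "card {y\<in>F. i \<in> f y} = 0") auto
  hence "{y\<in>F. i \<in> f y} \<noteq> {}" by (metis card.empty)
  then obtain y where "y \<in> F" "i \<in> f y" by blast
  thus "i \<in> {0..<p}" using h by blast
qed

lemma xsum_image: "inj_on h F \<Longrightarrow> xsum f (h ` F) = xsum (\<lambda>z. f (h z)) F"
proof -
  assume inj: "inj_on h F"
  have "\<And>i. {y\<in>h ` F. i \<in> f y} = h ` {z\<in>F. i \<in> f (h z)}" by auto
  moreover have "\<And>i. card (h ` {z\<in>F. i \<in> f (h z)}) = card {z\<in>F. i \<in> f (h z)}"
    by (rule card_image) (rule inj_on_subset[OF inj], auto)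
  ultimately show ?thesis by (simp add: xsum_def)
qed

lemma xsum_cong: "(\<And>y. y \<in> F \<Longrightarrow> f y = g y) \<Longrightarrow> xsum f F = xsum g F"
proof -
  assume h: "\<And>y. y \<in> F \<Longrightarrow> f y = g y"
  have "\<And>i. {y\<in>F. i \<in> f y} = {y\<in>F. i \<in> g y}" using h by auto
  thus ?thesis by (simp add: xsum_def)
qed

lemma xsum_shift: assumes "0 < p" "finite F" "\<And>y. y \<in> F \<Longrightarrow> f y \<subseteq> {0..<p}" shows
  "cshift p b (xsum f F) = xsum (\<lambda>y. cshift p b (f y)) F"
  using assms(2,3)
proof (induction F rule: finite_induct)
  case empty thus ?case by simp
next
  case (insert y F)
  have s: "xsum f F \<subseteq> {0..<p}" by (rule xsum_sub) (use insert in auto)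
  have fy: "f y \<subseteq> {0..<p}" using insert by auto
  show ?case using insert(1,2) insert(3) insert(4)
    by (simp add: xsum_insert cshift_sd[OF fy s])
qed

lemma xsum_short: "finite F \<Longrightarrow> (\<And>y. y \<in> F \<Longrightarrow> f y \<subseteq> {0..<p}) \<Longrightarrow>
   \<exists>F'\<subseteq>F. card F' \<le> p \<and> xsum f F' = xsum f F"
proof (induction "card F" arbitrary: F rule: less_induct)
  case less
  show ?case
  proof (cases "card F \<le> p")
    case True thus ?thesis by blast
  next
    case False
    have "\<not> inj_on (xsum f) (Pow F)"
    proof
      assume inj: "inj_on (xsum f) (Pow F)"
      have "xsum f ` Pow F \<subseteq> Pow {0..<p}"
        using xsum_sub[of _ f p] less(3) by blast
      hence "card (Pow F) \<le> card (Pow {0..<p})"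
        using card_inj_on_le[OF inj] by blast
      hence "(2::nat) ^ card F \<le> 2 ^ p" using less(2) by (simp add: card_Pow)
      thus False using False by simp
    qed
    then obtain S1 S2 where S: "S1 \<subseteq> F" "S2 \<subseteq> F" "S1 \<noteq> S2" "xsum f S1 = xsum f S2"
      unfolding inj_on_def by blast
    define D where "D = (S1 - S2) \<union> (S2 - S1)"
    have fS: "finite S1" "finite S2" using S(1,2) less(2) by (auto intro: finite_subset)
    have D0: "xsum f D = {}" unfolding D_def using xsum_symdiff[OF fS, of f] S(4) by simp
    have DF: "D \<subseteq> F" "D \<noteq> {}" using S unfolding D_def by auto
    have fD: "finite D" using DF less(2) by (auto intro: finite_subset)
    have e: "F - D = (F - D) \<union> (D - F)" using DF by auto
    have x2: "xsum f (F - D) = xsum f F"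
      using xsum_symdiff[OF less(2) fD, of f] D0 e by simp
    have c: "card (F - D) < card F"
      by (rule psubset_card_mono) (use DF less(2) in auto)
    obtain F' where "F' \<subseteq> F - D" "card F' \<le> p" "xsum f F' = xsum f (F - D)"
      using less(1)[OF c] less(2,3) by auto
    thus ?thesis using x2 by auto
  qed
qed



lemma solve_mod: assumes "prime (p::nat)" "0 < a" "a < p" "b < p"
  shows "\<exists>k<p. k * a mod p = b"
proof -
  have "coprime a p" using assms
    by (metis coprime_commute dvd_imp_le not_le prime_imp_coprime)
  then obtain x where "[a * x = b] (mod p)" using cong_solve by blast
  hence "(x mod p) * a mod p = b" using assms(4)
    by (simp add: cong_def mod_mult_right_eq mult.commute)
  moreover have "x mod p < p" using assms(1) prime_gt_0_nat by simp
  ultimately show ?thesis by blast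
qed

definition wl :: "('a, 'b) monoid_scheme \<Rightarrow> 'a set \<Rightarrow> nat \<Rightarrow> 'a \<Rightarrow> bool" where
  "wl G Y k g = (\<exists>xs. set xs \<subseteq> Y \<and> length xs \<le> k \<and> g = word_prod G xs)"

context group begin

lemma word_prod_carrier: "set xs \<subseteq> carrier G \<Longrightarrow> word_prod G xs \<in> carrier G"
  by (induction xs) (auto simp: word_prod_def)

lemma word_prod_append: "set xs \<subseteq> carrier G \<Longrightarrow> set ys \<subseteq> carrier G \<Longrightarrow>
   word_prod G (xs @ ys) = word_prod G xs \<otimes> word_prod G ys"
proof (induction xs)
  case Nil thus ?case by (simp add: word_prod_def word_prod_carrier[unfolded word_prod_def])
next
  case (Cons x xs)
  hence "word_prod G (x # xs @ ys) = x \<otimes> (word_prod G xs \<otimes> word_prod G ys)"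
    by (simp add: word_prod_def)
  also have "\<dots> = word_prod G (x # xs) \<otimes> word_prod G ys"
    using Cons.prems by (simp add: word_prod_def m_assoc word_prod_carrier[unfolded word_prod_def])
  finally show ?case by simp
qed

lemma wl_one: "wl G Y 0 \<one>"
  unfolding wl_def by (rule exI[of _ "[]"]) (simp add: word_prod_def)

lemma wl_gen: "y \<in> Y \<Longrightarrow> Y \<subseteq> carrier G \<Longrightarrow> wl G Y 1 y"
  unfolding wl_def by (rule exI[of _ "[y]"]) (auto simp: word_prod_def)

lemma wl_mono: "wl G Y k g \<Longrightarrow> k \<le> k' \<Longrightarrow> wl G Y k' g"
  unfolding wl_def by fastforce

lemma wl_carrier: "Y \<subseteq> carrier G \<Longrightarrow> wl G Y k g \<Longrightarrow> g \<in> carrier G"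
  unfolding wl_def using word_prod_carrier by blast

lemma wl_mult: "Y \<subseteq> carrier G \<Longrightarrow> wl G Y m g \<Longrightarrow> wl G Y n h \<Longrightarrow> wl G Y (m + n) (g \<otimes> h)"
proof -
  assume Y: "Y \<subseteq> carrier G" and "wl G Y m g" "wl G Y n h"
  then obtain xs ys where "set xs \<subseteq> Y" "length xs \<le> m" "g = word_prod G xs"
     "set ys \<subseteq> Y" "length ys \<le> n" "h = word_prod G ys" unfolding wl_def by blast
  thus ?thesis unfolding wl_def using Y
    by (intro exI[of _ "xs @ ys"]) (auto simp: word_prod_append)
qed

lemma wl_pow: "y \<in> Y \<Longrightarrow> Y \<subseteq> carrier G \<Longrightarrow> wl G Y n (y [^] (n::nat))"
proof (induction n)
  case 0 thus ?case using wl_one by simp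
next
  case (Suc n)
  have "wl G Y (n + 1) (y [^] n \<otimes> y)" using Suc wl_mult wl_gen by blast
  thus ?case by simp
qed

end



lemma mod_cancel_aux: "x < (p::nat) \<Longrightarrow> y < p \<Longrightarrow> ((x + y) mod p + (p - x) mod p) mod p = y"
proof -
  assume h: "x < p" "y < p"
  have "((x + y) mod p + (p - x) mod p) mod p = (x + y + (p - x)) mod p" by (simp add: mod_add_eq)
  also have "x + y + (p - x) = y + p" using h by simp
  finally show ?thesis using h by simp
qed

locale wr =
  fixes p :: nat and X :: "(nat set \<times> nat) set" and t :: "nat set \<times> nat"
  assumes prime: "prime p" and oddp: "odd p"
    and Xc: "X \<subseteq> carrier (wreath p)" and gen: "generate (wreath p) X = carrier (wreath p)"
    and tX: "t \<in> X" and ta: "snd t \<noteq> 0"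
begin

abbreviation "W \<equiv> wreath p"
abbreviation "a \<equiv> snd t"
abbreviation "Y \<equiv> X \<union> (\<lambda>x. inv\<^bsub>W\<^esub> x) ` X"

lemma p0: "0 < p" using prime prime_gt_0_nat by blast
lemma p2: "2 \<le> p" using prime prime_ge_2_nat by blast

sublocale W: group W using wreath_group[OF p0] .

lemma tc: "t \<in> carrier W" using tX Xc by blast
lemma a_lt: "a < p" using tc by (simp add: wreath_carrier)

lemma Yc: "Y \<subseteq> carrier W" using Xc by auto

lemma carrier_sub: "carrier W \<subseteq> Pow {0..<p} \<times> {0..<p}"
proof
  fix g assume "g \<in> carrier W"
  thus "g \<in> Pow {0..<p} \<times> {0..<p}" by (cases g) (simp add: wreath_carrier)
qed

lemma finite_carrier: "finite (carrier W)"
  by (rule finite_subset[OF carrier_sub]) auto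

lemma finite_X: "finite X" using finite_subset[OF Xc finite_carrier] .

lemma snd_lt: "g \<in> carrier W \<Longrightarrow> snd g < p" by (simp add: wreath_carrier)
lemma fst_sub: "g \<in> carrier W \<Longrightarrow> fst g \<subseteq> {0..<p}" by (simp add: wreath_carrier)

lemma snd_div0: "g \<in> carrier W \<Longrightarrow> h \<in> carrier W \<Longrightarrow> snd g = snd h \<Longrightarrow>
   snd (g \<otimes>\<^bsub>W\<^esub> inv\<^bsub>W\<^esub> h) = 0"
  using snd_lt[of h] p0 by (simp add: snd_mult snd_inv[OF p0] mod_add_right_eq)

lemma snd_conj: "g \<in> carrier W \<Longrightarrow> h \<in> carrier W \<Longrightarrow>
   snd (h \<otimes>\<^bsub>W\<^esub> g \<otimes>\<^bsub>W\<^esub> inv\<^bsub>W\<^esub> h) = snd g"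
  using snd_lt[of h] snd_lt[of g] p0 by (simp add: snd_mult snd_inv[OF p0] mod_cancel_aux)

definition comm :: "nat set \<times> nat \<Rightarrow> nat set \<times> nat" where
  "comm g = t \<otimes>\<^bsub>W\<^esub> g \<otimes>\<^bsub>W\<^esub> inv\<^bsub>W\<^esub> t \<otimes>\<^bsub>W\<^esub> inv\<^bsub>W\<^esub> g"

definition CC :: "nat set \<times> nat \<Rightarrow> nat set" where "CC g = fst (comm g)"

lemma comm_carrier: "g \<in> carrier W \<Longrightarrow> comm g \<in> carrier W"
  unfolding comm_def using tc by simp

lemma comm_snd: "g \<in> carrier W \<Longrightarrow> snd (comm g) = 0"
proof -
  assume g: "g \<in> carrier W"
  have "comm g = (t \<otimes>\<^bsub>W\<^esub> g \<otimes>\<^bsub>W\<^esub> inv\<^bsub>W\<^esub> t) \<otimes>\<^bsub>W\<^esub> inv\<^bsub>W\<^esub> g"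
    unfolding comm_def ..
  thus ?thesis using snd_div0[of "t \<otimes>\<^bsub>W\<^esub> g \<otimes>\<^bsub>W\<^esub> inv\<^bsub>W\<^esub> t" g] snd_conj[OF g tc] g tc by simp
qed

lemma comm_vec: "g \<in> carrier W \<Longrightarrow> comm g = vec (CC g)"
  using comm_snd vec_eq[OF p0] CC_def by simp

lemma CC_sub: "g \<in> carrier W \<Longrightarrow> CC g \<subseteq> {0..<p}"
  unfolding CC_def using comm_carrier fst_sub by blast

lemma inv_vec: "B \<subseteq> {0..<p} \<Longrightarrow> inv\<^bsub>W\<^esub> (vec B) = vec B"
  using wreath_inv[OF p0 vec_carrier[OF p0]] by (simp add: vec_def cshift_0)

end



context wr begin

definition ww :: "nat \<times> (nat set \<times> nat) \<Rightarrow> nat set" where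
  "ww y = cshift p (fst y * a mod p) (CC (snd y))"

definition MM :: "nat set set" where
  "MM = {xsum ww F | F. F \<subseteq> {0..<p} \<times> X}"

lemma ww_sub: "y \<in> {0..<p} \<times> X \<Longrightarrow> ww y \<subseteq> {0..<p}"
  unfolding ww_def using cshift_sub[OF p0] by blast

lemma finite_I: "finite ({0..<p} \<times> X)" using finite_X by simp

lemma MM_sub: "u \<in> MM \<Longrightarrow> u \<subseteq> {0..<p}"
  unfolding MM_def using xsum_sub[of _ ww p] ww_sub by blast

lemma MM_empty: "{} \<in> MM"
  unfolding MM_def by (rule CollectI, rule exI[of _ "{}"]) simp

lemma MM_sd: "u \<in> MM \<Longrightarrow> v \<in> MM \<Longrightarrow> sd u v \<in> MM"
proof -
  assume "u \<in> MM" "v \<in> MM"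
  then obtain F1 F2 where F: "F1 \<subseteq> {0..<p} \<times> X" "F2 \<subseteq> {0..<p} \<times> X" "u = xsum ww F1" "v = xsum ww F2"
    unfolding MM_def by blast
  have "finite F1" "finite F2" using F finite_I finite_subset by auto
  hence "sd u v = xsum ww ((F1 - F2) \<union> (F2 - F1))" using F(3,4) xsum_symdiff[of F1 F2 ww] by simp
  moreover have "(F1 - F2) \<union> (F2 - F1) \<subseteq> {0..<p} \<times> X" using F by blast
  ultimately show ?thesis unfolding MM_def by blast
qed

lemma MM_C: "x \<in> X \<Longrightarrow> CC x \<in> MM"
proof -
  assume x: "x \<in> X"
  have "CC x \<subseteq> {0..<p}" using CC_sub x Xc by blast
  hence "xsum ww {(0, x)} = CC x" unfolding xsum_single ww_def by (simp add: cshift_0)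
  moreover have "{(0, x)} \<subseteq> {0..<p} \<times> X" using x p0 by auto
  ultimately show ?thesis unfolding MM_def by blast
qed

lemma mod_shift_aux: "b = k0 * a mod p \<Longrightarrow> (b + k * a mod p) mod p = ((k + k0) mod p) * a mod p"
proof -
  assume b: "b = k0 * a mod p"
  have "(b + k * a mod p) mod p = (k0 * a + k * a) mod p" unfolding b by (simp add: mod_add_eq)
  also have "\<dots> = ((k + k0) * a) mod p" by (simp add: algebra_simps)
  also have "\<dots> = ((k + k0) mod p) * a mod p" by (simp add: mod_mult_left_eq)
  finally show ?thesis .
qed

lemma MM_shift: "u \<in> MM \<Longrightarrow> b < p \<Longrightarrow> cshift p b u \<in> MM"
proof -
  assume u: "u \<in> MM" and b: "b < p"
  then obtain F where F: "F \<subseteq> {0..<p} \<times> X" "u = xsum ww F" unfolding MM_def by blast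
  have fF: "finite F" using F finite_I finite_subset by auto
  obtain k0 where k0: "k0 < p" "k0 * a mod p = b"
    using solve_mod[OF prime _ a_lt b] ta by auto
  define h where "h = (\<lambda>y::nat \<times> (nat set \<times> nat). ((fst y + k0) mod p, snd y))"
  have inj: "inj_on h F"
  proof (rule inj_onI)
    fix y z assume yz: "y \<in> F" "z \<in> F" "h y = h z"
    have lt: "fst y \<in> {0..<p}" "fst z \<in> {0..<p}" using yz F by auto
    have "(fst y + k0) mod p = (fst z + k0) mod p" using yz(3) unfolding h_def by simp
    hence "fst y = fst z" using inj_onD[OF cshift_inj[of k0 p] _ lt] by simp
    thus "y = z" using yz unfolding h_def by (simp add: prod_eq_iff)
  qed
  have hF: "h ` F \<subseteq> {0..<p} \<times> X" using F p0 unfolding h_def by auto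
  have "cshift p b u = xsum (\<lambda>y. cshift p b (ww y)) F"
    unfolding F(2) by (rule xsum_shift[OF p0 fF]) (use F ww_sub in blast)
  also have "\<dots> = xsum (\<lambda>y. ww (h y)) F"
  proof (rule xsum_cong)
    fix y assume "y \<in> F"
    show "cshift p b (ww y) = ww (h y)"
      unfolding ww_def h_def cshift_comp using mod_shift_aux[OF k0(2)[symmetric]] by simp
  qed
  also have "\<dots> = xsum ww (h ` F)" using xsum_image[OF inj] by simp
  finally show ?thesis using hF unfolding MM_def by blast
qed

end


context wr begin

lemma canc1: "x \<in> carrier W \<Longrightarrow> y \<in> carrier W \<Longrightarrow> inv\<^bsub>W\<^esub> x \<otimes>\<^bsub>W\<^esub> (x \<otimes>\<^bsub>W\<^esub> y) = y"
  by (simp add: W.m_assoc[symmetric])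

lemma canc2: "x \<in> carrier W \<Longrightarrow> y \<in> carrier W \<Longrightarrow> x \<otimes>\<^bsub>W\<^esub> (inv\<^bsub>W\<^esub> x \<otimes>\<^bsub>W\<^esub> y) = y"
  by (simp add: W.m_assoc[symmetric])

lemma cocycle: "g \<in> carrier W \<Longrightarrow> h \<in> carrier W \<Longrightarrow>
   comm (g \<otimes>\<^bsub>W\<^esub> h) = comm g \<otimes>\<^bsub>W\<^esub> (g \<otimes>\<^bsub>W\<^esub> comm h \<otimes>\<^bsub>W\<^esub> inv\<^bsub>W\<^esub> g)"
  unfolding comm_def using tc by (simp add: W.inv_mult_group W.m_assoc canc1 canc2)

lemma comm_inv: "h \<in> carrier W \<Longrightarrow>
   comm (inv\<^bsub>W\<^esub> h) = inv\<^bsub>W\<^esub> h \<otimes>\<^bsub>W\<^esub> inv\<^bsub>W\<^esub> (comm h) \<otimes>\<^bsub>W\<^esub> inv\<^bsub>W\<^esub> (inv\<^bsub>W\<^esub> h)"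
  unfolding comm_def using tc by (simp add: W.inv_mult_group W.m_assoc canc1 canc2)

lemma comm_one: "comm \<one>\<^bsub>W\<^esub> = \<one>\<^bsub>W\<^esub>"
  unfolding comm_def using tc by simp

lemma CC_gen: "g \<in> generate W X \<Longrightarrow> CC g \<in> MM"
proof (induction g rule: generate.induct)
  case one show ?case unfolding CC_def comm_one by (simp add: wreath_one MM_empty)
next
  case (incl h) thus ?case by (rule MM_C)
next
  case (inv h)
  have hc: "h \<in> carrier W" using inv Xc by blast
  have "comm (inv\<^bsub>W\<^esub> h) = inv\<^bsub>W\<^esub> h \<otimes>\<^bsub>W\<^esub> vec (CC h) \<otimes>\<^bsub>W\<^esub> inv\<^bsub>W\<^esub> (inv\<^bsub>W\<^esub> h)"
    using comm_inv[OF hc] comm_vec[OF hc] inv_vec[OF CC_sub[OF hc]] by simp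
  also have "\<dots> = vec (cshift p (snd (inv\<^bsub>W\<^esub> h)) (CC h))"
    by (rule conj_vec[OF p0]) (use hc CC_sub[OF hc] in auto)
  finally have "CC (inv\<^bsub>W\<^esub> h) = cshift p (snd (inv\<^bsub>W\<^esub> h)) (CC h)"
    unfolding CC_def[of "inv\<^bsub>W\<^esub> h"] by (simp add: vec_def)
  moreover have "snd (inv\<^bsub>W\<^esub> h) < p" using hc snd_lt by simp
  ultimately show ?case using MM_shift MM_C inv by simp
next
  case (eng g1 g2)
  have c: "g1 \<in> carrier W" "g2 \<in> carrier W" using eng W.generate_in_carrier[OF Xc] by auto
  have "comm (g1 \<otimes>\<^bsub>W\<^esub> g2) = vec (CC g1) \<otimes>\<^bsub>W\<^esub> (g1 \<otimes>\<^bsub>W\<^esub> vec (CC g2) \<otimes>\<^bsub>W\<^esub> inv\<^bsub>W\<^esub> g1)"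
    using cocycle[OF c] comm_vec c by simp
  also have "\<dots> = vec (CC g1) \<otimes>\<^bsub>W\<^esub> vec (cshift p (snd g1) (CC g2))"
    using conj_vec[OF p0 c(1) CC_sub[OF c(2)]] by simp
  also have "\<dots> = vec (sd (CC g1) (cshift p (snd g1) (CC g2)))"
    by (rule vec_mult[OF p0]) (rule cshift_sub[OF p0])
  finally have "CC (g1 \<otimes>\<^bsub>W\<^esub> g2) = sd (CC g1) (cshift p (snd g1) (CC g2))"
    unfolding CC_def[of "g1 \<otimes>\<^bsub>W\<^esub> g2"] by (simp add: vec_def)
  moreover have "snd g1 < p" using c snd_lt by simp
  ultimately show ?case using MM_shift MM_sd eng by simp
qed

lemma CC_all: "g \<in> carrier W \<Longrightarrow> CC g \<in> MM"
  using CC_gen gen by simp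

lemma pair_MM: "sd {a} {0} \<in> MM"
proof -
  have v: "vec {0} \<in> carrier W" using vec_carrier[OF p0] p0 by simp
  have "comm (vec {0}) = (t \<otimes>\<^bsub>W\<^esub> vec {0} \<otimes>\<^bsub>W\<^esub> inv\<^bsub>W\<^esub> t) \<otimes>\<^bsub>W\<^esub> inv\<^bsub>W\<^esub> (vec {0})"
    unfolding comm_def ..
  also have "\<dots> = vec (cshift p a {0}) \<otimes>\<^bsub>W\<^esub> vec {0}"
    using conj_vec[OF p0 tc, of "{0}"] inv_vec[of "{0}"] p0 by simp
  also have "\<dots> = vec (sd {a} {0})"
    using vec_mult[OF p0, of "{0}" "cshift p a {0}"] p0 a_lt by (simp add: cshift_single)
  finally have "CC (vec {0}) = sd {a} {0}" unfolding CC_def by (simp add: vec_def)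
  thus ?thesis using CC_all[OF v] by simp
qed

lemma D_MM: "sd {0} {k * a mod p} \<in> MM"
proof (induction k)
  case 0 thus ?case using MM_empty by simp
next
  case (Suc k)
  have s: "cshift p (k * a mod p) (sd {a} {0}) \<in> MM"
    using MM_shift[OF pair_MM] p0 by simp
  have e: "cshift p (k * a mod p) (sd {a} {0}) = sd {Suc k * a mod p} {k * a mod p}"
    using p0 a_lt by (simp add: cshift_sd cshift_single mod_add_right_eq add.commute)
  have "sd {0} {Suc k * a mod p} = sd (sd {0} {k * a mod p}) (sd {Suc k * a mod p} {k * a mod p})"
    by auto
  thus ?case using MM_sd[OF Suc s] e by simp
qed

lemma pt_MM: "j < p \<Longrightarrow> sd {0} {j} \<in> MM"
  using solve_mod[OF prime _ a_lt, of j] ta D_MM by auto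

lemma even_odd_MM: "finite E \<Longrightarrow> E \<subseteq> {0..<p} \<Longrightarrow>
   (even (card E) \<longrightarrow> E \<in> MM) \<and> (odd (card E) \<longrightarrow> sd E {0} \<in> MM)"
proof (induction E rule: finite_induct)
  case empty thus ?case using MM_empty by simp
next
  case (insert e E)
  have pe: "sd {0} {e} \<in> MM" using pt_MM insert by simp
  have c: "card (insert e E) = Suc (card E)" using insert by simp
  have IH: "(even (card E) \<longrightarrow> E \<in> MM) \<and> (odd (card E) \<longrightarrow> sd E {0} \<in> MM)" using insert by simp
  show ?case
  proof (cases "even (card E)")
    case True
    have "sd (insert e E) {0} = sd E (sd {0} {e})" using insert(2) by auto
    thus ?thesis using True IH MM_sd[OF _ pe] c by simp
  next
    case False
    have "insert e E = sd (sd E {0}) (sd {0} {e})" using insert(2) by auto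
    thus ?thesis using False IH MM_sd[OF _ pe] c by simp
  qed
qed

lemma even_MM: "E \<subseteq> {0..<p} \<Longrightarrow> even (card E) \<Longrightarrow> E \<in> MM"
  using even_odd_MM[of E] finite_subset[of E "{0..<p}"] by auto

end


context wr begin

lemma gen_wl: "x \<in> X \<Longrightarrow> wl W Y 1 x" using W.wl_gen[OF _ Yc] by simp
lemma inv_wl: "x \<in> X \<Longrightarrow> wl W Y 1 (inv\<^bsub>W\<^esub> x)" using W.wl_gen[OF _ Yc] by simp

lemma comm_wl: "x \<in> X \<Longrightarrow> wl W Y 4 (comm x)"
proof -
  assume x: "x \<in> X"
  have "wl W Y (1 + 1 + 1 + 1) (comm x)" unfolding comm_def
    by (intro W.wl_mult[OF Yc] gen_wl inv_wl x tX)
  thus ?thesis by (simp add: eval_nat_numeral)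
qed

lemma P_wl: "finite S \<Longrightarrow> S \<subseteq> X \<Longrightarrow> wl W Y (4 * card S) (vec (xsum CC S))"
proof (induction S rule: finite_induct)
  case empty thus ?case using W.wl_one vec_empty[OF p0] by simp
next
  case (insert x S)
  have xc: "x \<in> carrier W" using insert Xc by blast
  have s: "xsum CC S \<subseteq> {0..<p}" by (rule xsum_sub) (use insert CC_sub Xc in blast)
  have "vec (xsum CC (insert x S)) = vec (CC x) \<otimes>\<^bsub>W\<^esub> vec (xsum CC S)"
    using xsum_insert[OF insert(1,2)] vec_mult[OF p0 s] by simp
  also have "\<dots> = comm x \<otimes>\<^bsub>W\<^esub> vec (xsum CC S)" using comm_vec[OF xc] by simp
  finally have e: "vec (xsum CC (insert x S)) = comm x \<otimes>\<^bsub>W\<^esub> vec (xsum CC S)" .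
  have "wl W Y (4 + 4 * card S) (comm x \<otimes>\<^bsub>W\<^esub> vec (xsum CC S))"
    by (rule W.wl_mult[OF Yc comm_wl]) (use insert in auto)
  thus ?case using e insert by simp
qed

lemma tele: "F \<subseteq> {0..<m} \<times> X \<Longrightarrow> wl W Y (m + 4 * card F) (vec (xsum ww F) \<otimes>\<^bsub>W\<^esub> t [^]\<^bsub>W\<^esub> m)"
proof (induction m arbitrary: F)
  case 0
  hence "F = {}" by auto
  thus ?case using W.wl_one vec_empty[OF p0] by simp
next
  case (Suc m)
  define F1 where "F1 = {y\<in>F. fst y < m}"
  define S where "S = {x. (m, x) \<in> F}"
  have fF: "finite F" using Suc.prems finite_X finite_subset[of F "{0..<Suc m} \<times> X"] by auto
  have F1s: "F1 \<subseteq> {0..<m} \<times> X" using Suc.prems unfolding F1_def by auto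
  have Ss: "S \<subseteq> X" using Suc.prems unfolding S_def by auto
  have fS: "finite S" using Ss finite_X finite_subset by auto
  have fF1: "finite F1" using fF unfolding F1_def by simp
  have sub1: "F \<subseteq> F1 \<union> Pair m ` S"
  proof
    fix y assume y: "y \<in> F"
    show "y \<in> F1 \<union> Pair m ` S"
    proof (cases "fst y < m")
      case True thus ?thesis using y unfolding F1_def by simp
    next
      case False
      hence "fst y = m" using y Suc.prems by (auto simp: mem_Times_iff)
      hence "y = Pair m (snd y)" "snd y \<in> S" using y unfolding S_def by (auto simp: prod_eq_iff)
      thus ?thesis by blast
    qed
  qed
  have Fu2: "F = F1 \<union> Pair m ` S" "F1 \<inter> Pair m ` S = {}"
    using sub1 unfolding F1_def S_def by auto
  have Fu: "F = (F1 - Pair m ` S) \<union> (Pair m ` S - F1)" using Fu2 by blast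
  have cF: "card F = card F1 + card S"
    using Fu2 fF1 fS card_Un_disjoint[of F1 "Pair m ` S"] card_image[of "Pair m" S] by (simp add: inj_on_def)
  define D where "D = xsum CC S"
  have Dsub: "D \<subseteq> {0..<p}" unfolding D_def by (rule xsum_sub) (use Ss CC_sub Xc in blast)
  define E1 where "E1 = xsum ww F1"
  have E1sub: "E1 \<subseteq> {0..<p}" unfolding E1_def by (rule xsum_sub) (simp add: ww_def cshift_sub[OF p0])
  have x2: "xsum ww (Pair m ` S) = xsum (\<lambda>x. cshift p (m * a mod p) (CC x)) S"
    by (subst xsum_image) (auto simp: inj_on_def ww_def)
  also have "\<dots> = cshift p (m * a mod p) D"
    unfolding D_def by (rule xsum_shift[OF p0 fS, symmetric]) (use Ss CC_sub Xc in blast)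
  finally have x2': "xsum ww (Pair m ` S) = cshift p (m * a mod p) D" .
  have "xsum ww F = sd E1 (cshift p (m * a mod p) D)"
    unfolding E1_def using xsum_symdiff[OF fF1 finite_imageI[OF fS], of ww "Pair m"] Fu x2' by simp
  hence vF: "vec (xsum ww F) = vec E1 \<otimes>\<^bsub>W\<^esub> vec (cshift p (m * a mod p) D)"
    using vec_mult[OF p0 cshift_sub[OF p0]] by simp
  have tm: "t [^]\<^bsub>W\<^esub> m \<in> carrier W" using tc by simp
  have sm: "snd (t [^]\<^bsub>W\<^esub> m) = m * a mod p" using snd_pow[OF p0 tc] by simp
  have com: "t [^]\<^bsub>W\<^esub> m \<otimes>\<^bsub>W\<^esub> vec D = vec (cshift p (m * a mod p) D) \<otimes>\<^bsub>W\<^esub> t [^]\<^bsub>W\<^esub> m"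
    using commute_vec[OF p0 tm Dsub] sm by simp
  have c1: "vec E1 \<in> carrier W" "vec D \<in> carrier W" "vec (cshift p (m * a mod p) D) \<in> carrier W"
    using vec_carrier[OF p0] E1sub Dsub cshift_sub[OF p0] by auto
  have "vec (xsum ww F) \<otimes>\<^bsub>W\<^esub> t [^]\<^bsub>W\<^esub> Suc m
      = vec E1 \<otimes>\<^bsub>W\<^esub> (vec (cshift p (m * a mod p) D) \<otimes>\<^bsub>W\<^esub> t [^]\<^bsub>W\<^esub> m) \<otimes>\<^bsub>W\<^esub> t"
    unfolding vF W.nat_pow_Suc using c1 tm tc by (simp add: W.m_assoc)
  also have "\<dots> = vec E1 \<otimes>\<^bsub>W\<^esub> (t [^]\<^bsub>W\<^esub> m \<otimes>\<^bsub>W\<^esub> vec D) \<otimes>\<^bsub>W\<^esub> t"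
    unfolding com ..
  also have "\<dots> = (vec E1 \<otimes>\<^bsub>W\<^esub> t [^]\<^bsub>W\<^esub> m) \<otimes>\<^bsub>W\<^esub> vec D \<otimes>\<^bsub>W\<^esub> t"
    using c1 tm tc by (simp add: W.m_assoc)
  finally have eq: "vec (xsum ww F) \<otimes>\<^bsub>W\<^esub> t [^]\<^bsub>W\<^esub> Suc m
      = (vec E1 \<otimes>\<^bsub>W\<^esub> t [^]\<^bsub>W\<^esub> m) \<otimes>\<^bsub>W\<^esub> vec D \<otimes>\<^bsub>W\<^esub> t" .
  have w1: "wl W Y (m + 4 * card F1) (vec E1 \<otimes>\<^bsub>W\<^esub> t [^]\<^bsub>W\<^esub> m)"
    unfolding E1_def by (rule Suc.IH[OF F1s])
  have w2: "wl W Y (4 * card S) (vec D)" unfolding D_def by (rule P_wl[OF fS Ss])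
  have "wl W Y (m + 4 * card F1 + 4 * card S + 1) ((vec E1 \<otimes>\<^bsub>W\<^esub> t [^]\<^bsub>W\<^esub> m) \<otimes>\<^bsub>W\<^esub> vec D \<otimes>\<^bsub>W\<^esub> t)"
    by (intro W.wl_mult[OF Yc] w1 w2 gen_wl tX)
  thus ?case using eq cF by (simp add: algebra_simps)
qed

lemma MM_wl: "u \<in> MM \<Longrightarrow> wl W Y (6 * p) (vec u)"
proof -
  assume "u \<in> MM"
  then obtain F0 where F0: "F0 \<subseteq> {0..<p} \<times> X" "u = xsum ww F0" unfolding MM_def by blast
  have fF0: "finite F0" using F0 finite_I finite_subset by auto
  obtain F where F: "F \<subseteq> F0" "card F \<le> p" "xsum ww F = u"
    using xsum_short[OF fF0, of ww p] F0 ww_sub by blast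
  have w1: "wl W Y (p + 4 * card F) (vec u \<otimes>\<^bsub>W\<^esub> t [^]\<^bsub>W\<^esub> p)"
    using tele[of F p] F F0 by auto
  have w2: "wl W Y p (inv\<^bsub>W\<^esub> (t [^]\<^bsub>W\<^esub> p))"
    using W.wl_pow[OF _ Yc, of "inv\<^bsub>W\<^esub> t" p] tX W.nat_pow_inv[OF tc] by simp
  have uc: "vec u \<in> carrier W" using vec_carrier[OF p0] MM_sub \<open>u \<in> MM\<close> by simp
  have "vec u = (vec u \<otimes>\<^bsub>W\<^esub> t [^]\<^bsub>W\<^esub> p) \<otimes>\<^bsub>W\<^esub> inv\<^bsub>W\<^esub> (t [^]\<^bsub>W\<^esub> p)"
    using uc tc by (simp add: W.m_assoc)
  moreover have "wl W Y (p + 4 * card F + p) ((vec u \<otimes>\<^bsub>W\<^esub> t [^]\<^bsub>W\<^esub> p) \<otimes>\<^bsub>W\<^esub> inv\<^bsub>W\<^esub> (t [^]\<^bsub>W\<^esub> p))"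
    by (rule W.wl_mult[OF Yc w1 w2])
  moreover have "p + 4 * card F + p \<le> 6 * p" using F(2) by simp
  ultimately show ?thesis using W.wl_mono by metis
qed

end


context wr begin

lemma odd_exists: "\<exists>x0\<in>X. par x0"
proof (rule ccontr)
  assume "\<not> (\<exists>x0\<in>X. par x0)"
  hence nx: "\<And>x. x \<in> X \<Longrightarrow> \<not> par x" by blast
  have "\<And>g. g \<in> generate W X \<Longrightarrow> \<not> par g"
  proof -
    fix g assume "g \<in> generate W X"
    thus "\<not> par g"
    proof (induction g rule: generate.induct)
      case one thus ?case using par_one[OF p0] by simp
    next
      case (incl h) thus ?case using nx by simp
    next
      case (inv h)
      have hc: "h \<in> carrier W" using inv Xc by blast
      show ?case using par_inv[OF p0 hc] nx[OF inv] by simp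
    next
      case (eng g1 g2) thus ?case using par_mult[OF p0] W.generate_in_carrier[OF Xc] by auto
    qed
  qed
  moreover have "vec {0} \<in> generate W X" using gen vec_carrier[OF p0] p0 by simp
  moreover have "par (vec {0})" by (simp add: par_def vec_def)
  ultimately show False by blast
qed

lemma z_exists: "\<exists>z. wl W Y p z \<and> snd z = 0 \<and> par z"
proof (cases "par t")
  case True
  have "wl W Y p (t [^]\<^bsub>W\<^esub> p)" using W.wl_pow[OF _ Yc] tX by simp
  moreover have "snd (t [^]\<^bsub>W\<^esub> p) = 0" using snd_pow[OF p0 tc] by simp
  moreover have "par (t [^]\<^bsub>W\<^esub> p)" using par_pow[OF p0 tc] True oddp by simp
  ultimately show ?thesis by blast
next
  case False
  obtain x0 where x0: "x0 \<in> X" "par x0" using odd_exists by blast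
  have x0c: "x0 \<in> carrier W" using x0 Xc by blast
  obtain k0 where k0: "k0 < p" "k0 * a mod p = snd x0"
    using solve_mod[OF prime _ a_lt snd_lt[OF x0c]] ta by auto
  define z where "z = x0 \<otimes>\<^bsub>W\<^esub> inv\<^bsub>W\<^esub> (t [^]\<^bsub>W\<^esub> k0)"
  have tk: "t [^]\<^bsub>W\<^esub> k0 \<in> carrier W" using tc by simp
  have "wl W Y (1 + k0) z" unfolding z_def W.nat_pow_inv[OF tc, symmetric]
    by (rule W.wl_mult[OF Yc gen_wl[OF x0(1)]]) (rule W.wl_pow[OF _ Yc], use tX in simp)
  hence "wl W Y p z" using k0 W.wl_mono by fastforce
  moreover have "snd z = 0" unfolding z_def
    by (rule snd_div0[OF x0c tk]) (simp add: snd_pow[OF p0 tc] k0)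
  moreover have "par z" unfolding z_def
    using par_mult[OF p0 x0c W.inv_closed[OF tk]] par_inv[OF p0 tk] par_pow[OF p0 tc] False x0 by simp
  ultimately show ?thesis by blast
qed

lemma all_wl: "g \<in> carrier W \<Longrightarrow> wl W Y (8 * p) g"
proof -
  assume g: "g \<in> carrier W"
  obtain k where k: "k < p" "k * a mod p = snd g"
    using solve_mod[OF prime _ a_lt snd_lt[OF g]] ta by auto
  have tk: "t [^]\<^bsub>W\<^esub> k \<in> carrier W" using tc by simp
  have wk: "wl W Y p (t [^]\<^bsub>W\<^esub> k)"
    using W.wl_pow[OF _ Yc, of t k] tX k W.wl_mono by fastforce
  define u1 where "u1 = g \<otimes>\<^bsub>W\<^esub> inv\<^bsub>W\<^esub> (t [^]\<^bsub>W\<^esub> k)"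
  have u1c: "u1 \<in> carrier W" unfolding u1_def using g tk by simp
  have su1: "snd u1 = 0" unfolding u1_def
    by (rule snd_div0[OF g tk]) (simp add: snd_pow[OF p0 tc] k)
  have gu: "g = u1 \<otimes>\<^bsub>W\<^esub> t [^]\<^bsub>W\<^esub> k" unfolding u1_def using g tk by (simp add: W.m_assoc)
  obtain z where z: "wl W Y p z" "snd z = 0" "par z" using z_exists by blast
  have zc: "z \<in> carrier W" using W.wl_carrier[OF Yc z(1)] .
  show ?thesis
  proof (cases "par u1")
    case False
    hence "fst u1 \<in> MM" using even_MM fst_sub[OF u1c] by (simp add: par_def)
    hence "wl W Y (6 * p) u1" using MM_wl vec_eq[OF p0 su1] by metis
    hence "wl W Y (6 * p + p) (u1 \<otimes>\<^bsub>W\<^esub> t [^]\<^bsub>W\<^esub> k)" by (rule W.wl_mult[OF Yc _ wk])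
    hence "wl W Y (6 * p + p) g" using gu by simp
    thus ?thesis using W.wl_mono by fastforce
  next
    case True
    define u2 where "u2 = u1 \<otimes>\<^bsub>W\<^esub> z"
    have u2c: "u2 \<in> carrier W" unfolding u2_def using u1c zc by simp
    have su2: "snd u2 = 0" unfolding u2_def using su1 z(2) by (simp add: snd_mult[OF p0])
    have pu2: "\<not> par u2" unfolding u2_def using par_mult[OF p0 u1c zc] True z(3) by simp
    hence "fst u2 \<in> MM" using even_MM fst_sub[OF u2c] by (simp add: par_def)
    hence w2: "wl W Y (6 * p) u2" using MM_wl vec_eq[OF p0 su2] by metis
    have zz: "z \<otimes>\<^bsub>W\<^esub> z = \<one>\<^bsub>W\<^esub>"
      using vec_eq[OF p0 z(2)] vec_mult[OF p0 fst_sub[OF zc], of "fst z"] vec_empty[OF p0] by simp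
    have "g = u2 \<otimes>\<^bsub>W\<^esub> z \<otimes>\<^bsub>W\<^esub> t [^]\<^bsub>W\<^esub> k"
      unfolding gu u2_def using u1c zc tk zz by (simp add: W.m_assoc)
    moreover have "wl W Y (6 * p + p + p) (u2 \<otimes>\<^bsub>W\<^esub> z \<otimes>\<^bsub>W\<^esub> t [^]\<^bsub>W\<^esub> k)"
      by (intro W.wl_mult[OF Yc] w2 z(1) wk)
    ultimately show ?thesis by simp
  qed
qed

end

lemma cay_bound:
  fixes p :: nat and X
  assumes "prime p" "odd p" "X \<subseteq> carrier (wreath p)" "generate (wreath p) X = carrier (wreath p)"
  shows "cay_diam (wreath p) X \<le> 20 * (p - 1)"
proof -
  have p0: "0 < p" and p2: "2 \<le> p" using assms(1) prime_gt_0_nat prime_ge_2_nat by auto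
  interpret W: group "wreath p" using wreath_group[OF p0] .
  have "\<exists>t\<in>X. snd t \<noteq> 0"
  proof (rule ccontr)
    assume "\<not> (\<exists>t\<in>X. snd t \<noteq> 0)"
    hence nx: "\<And>x. x \<in> X \<Longrightarrow> snd x = 0" by blast
    have "\<And>g. g \<in> generate (wreath p) X \<Longrightarrow> snd g = 0"
    proof -
      fix g assume "g \<in> generate (wreath p) X"
      thus "snd g = 0"
      proof (induction g rule: generate.induct)
        case one thus ?case by (simp add: wreath_one)
      next
        case (incl h) thus ?case using nx by simp
      next
        case (inv h)
        have hc: "h \<in> carrier (wreath p)" using inv assms(3) by blast
        show ?case using snd_inv[OF p0 hc] nx[OF inv] by simp
      next
        case (eng g1 g2) thus ?case by (simp add: snd_mult[OF p0])
      qed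
    qed
    moreover have "({}, 1) \<in> carrier (wreath p)" using p2 by (simp add: wreath_carrier)
    ultimately show False using assms(4) by fastforce
  qed
  then obtain t where t: "t \<in> X" "snd t \<noteq> 0" by blast
  interpret wr p X t using assms t by unfold_locales auto
  have "\<forall>g\<in>carrier (wreath p). wl (wreath p) Y (20 * (p - 1)) g"
  proof
    fix g assume "g \<in> carrier (wreath p)"
    hence "wl (wreath p) Y (8 * p) g" by (rule all_wl)
    moreover have "8 * p \<le> 20 * (p - 1)" using p2 by simp
    ultimately show "wl (wreath p) Y (20 * (p - 1)) g" using W.wl_mono by blast
  qed
  thus ?thesis unfolding cay_diam_def wl_def by (intro Least_le) simp
qed

theorem theorem1:
  fixes p :: nat
  assumes "prime p" and "odd p"
  shows "diam_max (wreath p) \<le> 20 * (p - 1)"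
proof -
  have p0: "0 < p" using assms(1) prime_gt_0_nat by auto
  interpret W: group "wreath p" using wreath_group[OF p0] .
  let ?S = "{cay_diam (wreath p) X | X. X \<subseteq> carrier (wreath p) \<and> generate (wreath p) X = carrier (wreath p)}"
  have "carrier (wreath p) \<subseteq> Pow {0..<p} \<times> {0..<p}"
  proof
    fix g assume "g \<in> carrier (wreath p)"
    thus "g \<in> Pow {0..<p} \<times> {0..<p}" by (cases g) (simp add: wreath_carrier)
  qed
  hence fc: "finite (carrier (wreath p))" by (rule finite_subset) simp
  have "?S = (\<lambda>X. cay_diam (wreath p) X) ` {X. X \<subseteq> carrier (wreath p) \<and> generate (wreath p) X = carrier (wreath p)}"
    by blast
  moreover have "finite {X. X \<subseteq> carrier (wreath p) \<and> generate (wreath p) X = carrier (wreath p)}"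
    using fc by simp
  ultimately have fin: "finite ?S" by simp
  have "generate (wreath p) (carrier (wreath p)) = carrier (wreath p)"
    using W.generate_incl[of "carrier (wreath p)"] generate.incl[of _ "carrier (wreath p)" "wreath p"] by blast
  hence ne: "?S \<noteq> {}" by blast
  show ?thesis unfolding diam_max_def
    using cay_bound[OF assms] fin ne by (intro Max.boundedI) auto
qed


end
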